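(* For every positive integer $n$, \[ q(n) = L+\sum_{k=1}^\infty (-1)^{k+1} \Big( q\Big( \frac{2n-P_{5,k}}{2}\Big) +q\Big( \frac{2n-Q_{5,k}}{2}\Big) \Big), \] where $P_{5,k}=\frac{k(3k-1)}{2}$, $Q_{5,k}=\frac{k(3k+1)}{2}$, and \[ L = \begin{cases} -1, &\text{if } 2n=\Delta_{4k+1}\text{ or } 2n=\Delta_{4k+2}\text{ for some }k\in\mathbb{N}_0, \\ 1, &\text{if } 2n=\Delta_{4k+3}\text{ or }2n=\Delta_{4k+4}\text{ for some }k\in\mathbb{N}_0, \\ 0, & \text{otherwise.} \end{cases} \]
   Context: $q(n)$ is the number of partitions of $n$ into distinct parts, with $q(0)=1$, and $q(x)=0$ for every rational $x\notin\mathbb{N}_0$ (in particular for non-integers and negative numbers). $\Delta_m=\frac{m(m+1)}{2}$ is the $m$-th triangular number. *)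

theory Defs
  imports Complex_Main
begin

text \<open>Number of partitions of n into distinct parts: finite sets of positive
  integers summing to n (each such set is a subset of {1..n}).\<close>
definition qd :: "nat \<Rightarrow> nat" where
  "qd n = card {A :: nat set. A \<subseteq> {1..n} \<and> \<Sum>A = n}"

definition q :: "rat \<Rightarrow> nat" where
  "q x = (if x \<in> \<int> \<and> x \<ge> 0 then qd (nat \<lfloor>x\<rfloor>) else 0)"

definition tri :: "nat \<Rightarrow> nat" where
  "tri m = m * (m + 1) div 2"

definition P5 :: "nat \<Rightarrow> rat" where
  "P5 k = of_nat k * (3 * of_nat k - 1) / 2"

definition Q5 :: "nat \<Rightarrow> rat" where
  "Q5 k = of_nat k * (3 * of_nat k + 1) / 2"

definition Lterm :: "nat \<Rightarrow> int" where
  "Lterm n = (if \<exists>k. 2 * n = tri (4*k+1) \<or> 2 * n = tri (4*k+2) then -1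
              else if \<exists>k. 2 * n = tri (4*k+3) \<or> 2 * n = tri (4*k+4) then 1
              else 0)"

end

theory Submission
  imports Defs "HOL-Computational_Algebra.Formal_Power_Series"
begin

fun gb :: "'a::comm_ring_1 \<Rightarrow> nat \<Rightarrow> nat \<Rightarrow> 'a" where
  "gb r 0 b = 1"
| "gb r (Suc a) 0 = 1"
| "gb r (Suc a) (Suc b) = gb r a (Suc b) + r^(Suc a) * gb r (Suc a) b"

declare gb.simps(3)[simp del]

lemma gb_0_right [simp]: "gb r a 0 = 1"
  by (cases a) auto

lemma gb_1_right: "gb r a 1 = (\<Sum>i\<le>a. r^i)"
  by (induction a) (auto simp: gb.simps(3)[of r _ 0, simplified])

lemma gb_1_left: "gb r 1 b = (\<Sum>i\<le>b. r^i)"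
proof (induction b)
  case (Suc b)
  have "gb r 1 (Suc b) = 1 + r * gb r 1 b" by (simp add: numeral_eq_Suc gb.simps(3))
  also have "\<dots> = 1 + (\<Sum>i\<le>b. r^(Suc i))" using Suc
    by (simp add: sum_distrib_left)
  also have "\<dots> = (\<Sum>i\<le>Suc b. r^i)" 
    by (subst sum.atMost_Suc_shift) simp
  finally show ?case .
qed simp

lemma gbD: "(1 - r^(Suc a)) * gb r (Suc a) b = (1 - r^(Suc b)) * gb r a (Suc b)"
proof (induction r a b rule: gb.induct)
  case (1 r b)
  then show ?case using gb_1_left[of r b] sum_gp_basic[of r b] by (simp add: mult.commute)
next
  case (2 r a)
  then show ?case using gb_1_right[of r "Suc a"] sum_gp_basic[of r "Suc a"]
    by (simp add: mult.commute)
next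
  case (3 r a b)
  have "(1 - r^(Suc (Suc a))) * gb r (Suc (Suc a)) (Suc b)
      = (1 - r^(Suc (Suc a))) * gb r (Suc a) (Suc b) + r^(Suc (Suc a)) * ((1 - r^(Suc (Suc a))) * gb r (Suc (Suc a)) b)"
    by (simp only: gb.simps(3)[of r "Suc a" b]) (simp add: algebra_simps)
  also have "\<dots> = (1 - r^(Suc (Suc a))) * gb r (Suc a) (Suc b) + r^(Suc (Suc a)) * ((1 - r^(Suc b)) * gb r (Suc a) (Suc b))"
    using 3(2) by simp
  also have "\<dots> = (1 - r^(Suc (Suc (Suc (a + b))))) * gb r (Suc a) (Suc b)"
    by (simp add: algebra_simps power_add)
  finally have L: "(1 - r^(Suc (Suc a))) * gb r (Suc (Suc a)) (Suc b) = (1 - r^(Suc (Suc (Suc (a + b))))) * gb r (Suc a) (Suc b)" .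
  have "(1 - r^(Suc (Suc b))) * gb r (Suc a) (Suc (Suc b))
      = (1 - r^(Suc (Suc b))) * gb r a (Suc (Suc b)) + r^(Suc a) * ((1 - r^(Suc (Suc b))) * gb r (Suc a) (Suc b))"
    by (simp only: gb.simps(3)[of r a "Suc b"]) (simp add: algebra_simps)
  also have "\<dots> = (1 - r^(Suc a)) * gb r (Suc a) (Suc b) + r^(Suc a) * ((1 - r^(Suc (Suc b))) * gb r (Suc a) (Suc b))"
    using 3(1) by simp
  also have "\<dots> = (1 - r^(Suc (Suc (Suc (a + b))))) * gb r (Suc a) (Suc b)"
    by (simp add: algebra_simps power_add)
  finally show ?case using L by simp
qed

lemma gbB: "gb r (Suc a) (Suc b) = r^(Suc b) * gb r a (Suc b) + gb r (Suc a) b"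
proof -
  have "gb r (Suc a) (Suc b) = gb r a (Suc b) + r^(Suc a) * gb r (Suc a) b" by (simp add: gb.simps(3))
  moreover have "(1 - r^(Suc a)) * gb r (Suc a) b = (1 - r^(Suc b)) * gb r a (Suc b)" by (rule gbD)
  ultimately show ?thesis by (simp add: algebra_simps)
qed

lemma gb_sym: "gb r a b = gb r b a"
proof (induction r a b rule: gb.induct)
  case (1 r b) then show ?case by simp
next
  case (2 r a) then show ?case by simp
next
  case (3 r a b)
  then show ?case using gbB[of r b a] by (simp add: add.commute gb.simps(3))
qed

definition Pq :: "'a::comm_ring_1 \<Rightarrow> nat \<Rightarrow> 'a" where
  "Pq r n = (\<Prod>k<n. 1 - r^(Suc k))"

lemma gbH: "gb r a b * Pq r b = (\<Prod>i<b. 1 - r^(Suc a + i))"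
proof (induction b arbitrary: a)
  case 0 then show ?case by (simp add: Pq_def)
next
  case (Suc b)
  have "gb r a (Suc b) * Pq r (Suc b) = ((1 - r^(Suc b)) * gb r a (Suc b)) * Pq r b"
    by (simp add: Pq_def algebra_simps)
  also have "\<dots> = (1 - r^(Suc a)) * (gb r (Suc a) b * Pq r b)" by (simp only: gbD[symmetric] mult.assoc)
  also have "\<dots> = (1 - r^(Suc a)) * (\<Prod>i<b. 1 - r^(Suc (Suc a) + i))" using Suc by simp
  also have "\<dots> = (\<Prod>i<Suc b. 1 - r^(Suc a + i))"
    by (subst prod.lessThan_Suc_shift) (simp add: ac_simps)
  finally show ?case .
qed


definition tz :: "int \<Rightarrow> nat" where
  "tz j = nat (j * (j + 1) div 2)"

lemma tz_int: "int (tz j) = j * (j + 1) div 2"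
proof -
  have "j * (j + 1) \<ge> 0"
    by (cases "j \<ge> 0") (auto simp: mult_nonneg_nonneg mult_nonpos_nonpos)
  then show ?thesis unfolding tz_def by simp
qed

lemma tz_succ: "int (tz (j + 1)) = int (tz j) + j + 1"
proof -
  have "(j + 1) * (j + 1 + 1) = j * (j + 1) + 2 * (j + 1)" by algebra
  then have "(j + 1) * (j + 1 + 1) div 2 = j * (j + 1) div 2 + (j + 1)" by simp
  then show ?thesis by (simp add: tz_int)
qed

definition wt :: "'a::comm_ring_1 \<Rightarrow> 'a \<Rightarrow> int \<Rightarrow> 'a" where
  "wt u v j = u ^ tz j * v ^ tz (- j)"

definition gz :: "'a::comm_ring_1 \<Rightarrow> int \<Rightarrow> int \<Rightarrow> 'a" where
  "gz r a b = (if a < 0 \<or> b < 0 then 0 else gb r (nat a) (nat b))"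

definition FF :: "'a::comm_ring_1 \<Rightarrow> 'a \<Rightarrow> nat \<Rightarrow> 'a" where
  "FF u v n = (\<Prod>k<n. (1 + u ^ Suc k * v ^ k) * (1 + u ^ k * v ^ Suc k))"

lemma gb_rec_nat:
  "gb r (Suc a) (Suc b) = gb r a b * (1 + r ^ (a + b + 1))
     + r ^ (b + 1) * (if a = 0 then 0 else gb r (a - 1) (b + 1))
     + r ^ (a + 1) * (if b = 0 then 0 else gb r (a + 1) (b - 1))"
proof -
  have A: "gb r (Suc a) (Suc b) = gb r a (Suc b) + r^(Suc a) * gb r (Suc a) b"
    by (simp add: gb.simps(3))
  have B1: "gb r a (Suc b) = r ^ (b + 1) * (if a = 0 then 0 else gb r (a - 1) (b + 1)) + gb r a b"
    by (cases a) (simp_all add: gbB)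
  have B2: "gb r (Suc a) b = r ^ b * gb r a b + (if b = 0 then 0 else gb r (a + 1) (b - 1))"
    by (cases b) (simp_all add: gbB)
  show ?thesis unfolding A B1 B2 by (simp add: algebra_simps power_add)
qed

lemma gz_rec:
  assumes "a \<ge> -1" "b \<ge> -1" "a + b \<ge> 0"
  shows "gz r (a + 1) (b + 1) = gz r a b * (1 + r ^ nat (a + b + 1))
     + r ^ nat (b + 1) * gz r (a - 1) (b + 1) + r ^ nat (a + 1) * gz r (a + 1) (b - 1)"
proof (cases "a = -1")
  case True
  then show ?thesis using assms by (simp add: gz_def)
next
  case False
  note a = this
  show ?thesis
  proof (cases "b = -1")
    case True
    then show ?thesis using assms by (simp add: gz_def)
  next
    case False
    with a assms have "a \<ge> 0" "b \<ge> 0" by auto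
    then obtain a' b' where ab: "a = int a'" "b = int b'"
      by (metis nonneg_int_cases)
    have e1: "nat (a + 1) = Suc a'" "nat (b + 1) = Suc b'" "nat (a + b + 1) = a' + b' + 1"
      using ab by auto
    show ?thesis
      unfolding gz_def using ab gb_rec_nat[of r a' b']
      by (auto simp: e1 nat_diff_distrib' nat_add_distrib)
  qed
qed

lemma sum_shift_int: "(\<Sum>j\<in>{a..b::int}. f j) = (\<Sum>j\<in>{a+1..b+1}. f (j - 1))"
  by (rule sum.reindex_bij_witness[of _ "\<lambda>j. j - 1" "\<lambda>j. j + 1"]) auto

lemma wt_shift_up:
  assumes "j \<le> int n"
  shows "wt u v j * (u ^ Suc n * v ^ n) = wt u v (j + 1) * (u * v) ^ nat (int n - j)"
proof -
  have e1: "tz j + Suc n = tz (j + 1) + nat (int n - j)"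
    using tz_succ[of j] assms by linarith
  have e2: "tz (- j) + n = tz (- (j + 1)) + nat (int n - j)"
    using tz_succ[of "- (j + 1)"] assms by simp
  have L: "wt u v j * (u ^ Suc n * v ^ n) = u ^ (tz j + Suc n) * v ^ (tz (- j) + n)"
    unfolding wt_def power_add by (simp only: ac_simps)
  have R: "wt u v (j + 1) * (u * v) ^ nat (int n - j) =
     u ^ (tz (j + 1) + nat (int n - j)) * v ^ (tz (- (j + 1)) + nat (int n - j))"
    unfolding wt_def power_add power_mult_distrib by (simp only: ac_simps)
  show ?thesis unfolding L R e1 e2 ..
qed

lemma wt_shift_down:
  assumes "j \<ge> - int n"
  shows "wt u v j * (u ^ n * v ^ Suc n) = wt u v (j - 1) * (u * v) ^ nat (int n + j)"
proof -
  have e1: "tz j + n = tz (j - 1) + nat (int n + j)"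
    using tz_succ[of "j - 1"] assms by simp
  have e2: "tz (- j) + Suc n = tz (- (j - 1)) + nat (int n + j)"
    using tz_succ[of "- j"] assms by simp
  have L: "wt u v j * (u ^ n * v ^ Suc n) = u ^ (tz j + n) * v ^ (tz (- j) + Suc n)"
    unfolding wt_def power_add by (simp only: ac_simps)
  have R: "wt u v (j - 1) * (u * v) ^ nat (int n + j) =
     u ^ (tz (j - 1) + nat (int n + j)) * v ^ (tz (- (j - 1)) + nat (int n + j))"
    unfolding wt_def power_add power_mult_distrib by (simp only: ac_simps)
  show ?thesis unfolding L R e1 e2 ..
qed


lemma sum_shift_int': "(\<Sum>j\<in>{a..b::int}. f j) = (\<Sum>j\<in>{a-1..b-1}. f (j + 1))"
  by (rule sum.reindex_bij_witness[of _ "\<lambda>j. j + 1" "\<lambda>j. j - 1"]) auto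

theorem jtp_finite:
  "FF u v n = (\<Sum>j\<in>{-int n..int n}. gz (u*v) (int n + j) (int n - j) * wt u v j)"
proof (induction n)
  case 0
  show ?case by (simp add: FF_def gz_def wt_def tz_def)
next
  case (Suc n)
  define r where "r = u * v"
  define c where "c j = gz r (int n + j) (int n - j)" for j
  define I where "I = {-int n..int n}"
  define I' where "I' = {-int n - 1..int n + 1}"
  define S where "S = (\<Sum>j\<in>I. c j * wt u v j)"
  have IH: "FF u v n = S" using Suc unfolding S_def c_def I_def r_def .
  have c0: "c j = 0" if "j \<notin> I" for j using that unfolding c_def I_def gz_def by auto
  have sub: "I \<subseteq> I'" unfolding I_def I'_def by auto
  have AB: "(u ^ Suc n * v ^ n) * (u ^ n * v ^ Suc n) = r ^ nat (int n + int n + 1)"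
  proof -
    have "nat (int n + int n + 1) = Suc n + n" by simp
    then show ?thesis unfolding r_def by (simp only: power_add power_mult_distrib ac_simps)
  qed
  have FS: "FF u v (Suc n) = S + S * (u ^ Suc n * v ^ n) + S * (u ^ n * v ^ Suc n) + S * r ^ nat (int n + int n + 1)"
  proof -
    have "FF u v (Suc n) = FF u v n * ((1 + u ^ Suc n * v ^ n) * (1 + u ^ n * v ^ Suc n))"
      unfolding FF_def by (rule prod.lessThan_Suc)
    also have "\<dots> = S * ((1 + u ^ Suc n * v ^ n) * (1 + u ^ n * v ^ Suc n))" by (simp only: IH)
    also have "\<dots> = S + S * (u ^ Suc n * v ^ n) + S * (u ^ n * v ^ Suc n) + S * ((u ^ Suc n * v ^ n) * (u ^ n * v ^ Suc n))"
      by (simp only: distrib_left distrib_right mult_1_left mult_1_right add.assoc)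
    finally show ?thesis by (simp only: AB)
  qed
  have T0: "S = (\<Sum>j\<in>I'. c j * wt u v j)"
    unfolding S_def by (rule sum.mono_neutral_left) (use sub c0 in \<open>auto simp: I'_def\<close>)
  have T3: "S * r ^ nat (int n + int n + 1) = (\<Sum>j\<in>I'. c j * r ^ nat (int n + int n + 1) * wt u v j)"
    unfolding T0 sum_distrib_right by (rule sum.cong[OF refl]) (simp only: mult.assoc mult.commute mult.left_commute)
  have TA: "S * (u ^ Suc n * v ^ n) = (\<Sum>j\<in>I'. c (j - 1) * r ^ nat (int n + 1 - j) * wt u v j)"
  proof -
    have "S * (u ^ Suc n * v ^ n) = (\<Sum>j\<in>I. c j * r ^ nat (int n - j) * wt u v (j + 1))"
      unfolding S_def sum_distrib_right
    proof (rule sum.cong[OF refl])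
      fix j assume "j \<in> I"
      then have "j \<le> int n" by (simp add: I_def)
      have "c j * wt u v j * (u ^ Suc n * v ^ n) = c j * (wt u v j * (u ^ Suc n * v ^ n))" by (simp only: mult.assoc)
      also have "\<dots> = c j * (wt u v (j + 1) * r ^ nat (int n - j))"
        by (simp only: wt_shift_up[OF \<open>j \<le> int n\<close>] r_def)
      finally show "c j * wt u v j * (u ^ Suc n * v ^ n) = c j * r ^ nat (int n - j) * wt u v (j + 1)"
        by (simp only: mult.assoc mult.commute mult.left_commute)
    qed
    also have "\<dots> = (\<Sum>j\<in>{-int n + 1..int n + 1}. c (j - 1) * r ^ nat (int n + 1 - j) * wt u v j)"
      unfolding I_def by (subst sum_shift_int) (simp add: algebra_simps)
    also have "\<dots> = (\<Sum>j\<in>I'. c (j - 1) * r ^ nat (int n + 1 - j) * wt u v j)"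
      by (rule sum.mono_neutral_left) (auto simp: I'_def c_def gz_def)
    finally show ?thesis .
  qed
  have TB: "S * (u ^ n * v ^ Suc n) = (\<Sum>j\<in>I'. c (j + 1) * r ^ nat (int n + 1 + j) * wt u v j)"
  proof -
    have "S * (u ^ n * v ^ Suc n) = (\<Sum>j\<in>I. c j * r ^ nat (int n + j) * wt u v (j - 1))"
      unfolding S_def sum_distrib_right
    proof (rule sum.cong[OF refl])
      fix j assume "j \<in> I"
      then have "j \<ge> - int n" by (simp add: I_def)
      have "c j * wt u v j * (u ^ n * v ^ Suc n) = c j * (wt u v j * (u ^ n * v ^ Suc n))" by (simp only: mult.assoc)
      also have "\<dots> = c j * (wt u v (j - 1) * r ^ nat (int n + j))"
        by (simp only: wt_shift_down[OF \<open>j \<ge> - int n\<close>] r_def)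
      finally show "c j * wt u v j * (u ^ n * v ^ Suc n) = c j * r ^ nat (int n + j) * wt u v (j - 1)"
        by (simp only: mult.assoc mult.commute mult.left_commute)
    qed
    also have "\<dots> = (\<Sum>j\<in>{-int n - 1..int n - 1}. c (j + 1) * r ^ nat (int n + 1 + j) * wt u v j)"
      unfolding I_def by (subst sum_shift_int') (simp add: algebra_simps)
    also have "\<dots> = (\<Sum>j\<in>I'. c (j + 1) * r ^ nat (int n + 1 + j) * wt u v j)"
      by (rule sum.mono_neutral_left) (auto simp: I'_def c_def gz_def)
    finally show ?thesis .
  qed
  have pt: "gz r (int (Suc n) + j) (int (Suc n) - j) =
      c j + c (j - 1) * r ^ nat (int n + 1 - j) + c (j + 1) * r ^ nat (int n + 1 + j)
       + c j * r ^ nat (int n + int n + 1)" if "j \<in> I'" for j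
  proof -
    have "gz r ((int n + j) + 1) ((int n - j) + 1) = gz r (int n + j) (int n - j) * (1 + r ^ nat ((int n + j) + (int n - j) + 1))
     + r ^ nat ((int n - j) + 1) * gz r ((int n + j) - 1) ((int n - j) + 1) + r ^ nat ((int n + j) + 1) * gz r ((int n + j) + 1) ((int n - j) - 1)"
      by (rule gz_rec) (use that in \<open>auto simp: I'_def\<close>)
    note G2 = this
    have G: "gz r (int (Suc n) + j) (int (Suc n) - j) = gz r ((int n + j) + 1) ((int n - j) + 1)"
      by (simp add: algebra_simps)
    have e1: "nat ((int n + j) + (int n - j) + 1) = nat (int n + int n + 1)" by simp
    have e2: "gz r ((int n + j) - 1) ((int n - j) + 1) = c (j - 1)" unfolding c_def by (simp add: algebra_simps)
    have e3: "gz r ((int n + j) + 1) ((int n - j) - 1) = c (j + 1)" unfolding c_def by (simp add: algebra_simps)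
    have e4: "nat ((int n - j) + 1) = nat (int n + 1 - j)" "nat ((int n + j) + 1) = nat (int n + 1 + j)"
      by (simp_all add: algebra_simps)
    have e5: "gz r (int n + j) (int n - j) = c j" unfolding c_def ..
    note G3 = G2[unfolded e1 e2 e3 e4 e5]
    show ?thesis unfolding G G3 by (simp add: algebra_simps)
  qed
  have "FF u v (Suc n) = (\<Sum>j\<in>I'. (c j + c (j - 1) * r ^ nat (int n + 1 - j) + c (j + 1) * r ^ nat (int n + 1 + j)
       + c j * r ^ nat (int n + int n + 1)) * wt u v j)"
    unfolding FS TA TB T3 unfolding T0 by (simp only: distrib_right sum.distrib)
  also have "\<dots> = (\<Sum>j\<in>I'. gz r (int (Suc n) + j) (int (Suc n) - j) * wt u v j)"
  proof (rule sum.cong[OF refl])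
    fix j assume "j \<in> I'"
    show "(c j + c (j - 1) * r ^ nat (int n + 1 - j) + c (j + 1) * r ^ nat (int n + 1 + j)
       + c j * r ^ nat (int n + int n + 1)) * wt u v j = gz r (int (Suc n) + j) (int (Suc n) - j) * wt u v j"
      by (simp only: pt[OF \<open>j \<in> I'\<close>])
  qed
  moreover have "I' = {- int (Suc n)..int (Suc n)}" unfolding I'_def by auto
  ultimately show ?case unfolding r_def by simp
qed


lemma tz_sum: "int (tz j) + int (tz (- j)) = j * j"
proof (cases "even j")
  case True
  then obtain k where k: "j = 2 * k" by blast
  have "j * (j + 1) = 2 * (k * (2 * k + 1))" "(- j) * (- j + 1) = 2 * (k * (2 * k - 1))"
    unfolding k by algebra+
  then show ?thesis unfolding tz_int by (simp add: k algebra_simps)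
next
  case False
  then obtain k where k: "j = 2 * k + 1" using oddE by blast
  have "j * (j + 1) = 2 * ((2 * k + 1) * (k + 1))" "(- j) * (- j + 1) = 2 * ((2 * k + 1) * k)"
    unfolding k by algebra+
  then show ?thesis unfolding tz_int by (simp add: k algebra_simps)
qed

lemma Xdvd_nth: "fps_X ^ m dvd (f :: 'a::comm_ring_1 fps) \<Longrightarrow> i < m \<Longrightarrow> fps_nth f i = 0"
  by (auto elim!: dvdE simp: fps_X_power_mult_nth)

lemma Xdvd_prod_one_minus:
  fixes g :: "nat \<Rightarrow> 'a::comm_ring_1 fps"
  assumes "finite S" "\<And>k. k \<in> S \<Longrightarrow> fps_X ^ m dvd g k"
  shows "fps_X ^ m dvd ((\<Prod>k\<in>S. 1 - g k) - 1)"
  using assms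
proof (induction S rule: finite_induct)
  case empty then show ?case by simp
next
  case (insert k S)
  have "(\<Prod>k\<in>insert k S. 1 - g k) - 1 = ((\<Prod>k\<in>S. 1 - g k) - 1) - g k * (\<Prod>k\<in>S. 1 - g k)"
    using insert(1,2) by (simp add: algebra_simps)
  moreover have "fps_X ^ m dvd ((\<Prod>k\<in>S. 1 - g k) - 1)" using insert by auto
  moreover have "fps_X ^ m dvd g k" using insert by auto
  ultimately show ?case by (metis dvd_diff dvd_mult2)
qed

lemma Xpow_dvd_pow:
  fixes q :: "'a::comm_ring_1 fps"
  assumes "fps_X dvd q" "m \<le> k"
  shows "fps_X ^ m dvd q ^ k"
proof -
  have "fps_X ^ m dvd fps_X ^ k" using assms(2) by (rule le_imp_power_dvd)
  also have "fps_X ^ k dvd q ^ k" using assms(1) by (rule dvd_power_same)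
  finally show ?thesis .
qed

lemma keyK:
  fixes q :: "'a::comm_ring_1 fps"
  assumes q: "fps_X dvd q" and "b \<le> n" "b \<le> a"
  shows "fps_X ^ Suc b dvd (Pq q n * gb q a b - 1)"
proof -
  have split: "Pq q n = Pq q b * (\<Prod>k\<in>{b..<n}. 1 - q ^ Suc k)"
    unfolding Pq_def using prod.atLeastLessThan_concat[of 0 b n "\<lambda>k. 1 - q ^ Suc k"] assms(2)
    by (simp add: atLeast0LessThan)
  have eq: "Pq q n * gb q a b - 1 = gb q a b * Pq q b * ((\<Prod>k\<in>{b..<n}. 1 - q ^ Suc k) - 1)
      + (gb q a b * Pq q b - 1)"
    unfolding split by (simp add: algebra_simps)
  have d1: "fps_X ^ Suc b dvd ((\<Prod>k\<in>{b..<n}. 1 - q ^ Suc k) - 1)"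
    by (rule Xdvd_prod_one_minus, simp, rule Xpow_dvd_pow[OF q], simp)
  have d2: "fps_X ^ Suc b dvd (gb q a b * Pq q b - 1)"
    unfolding gbH by (rule Xdvd_prod_one_minus, simp, rule Xpow_dvd_pow[OF q]) (use assms(3) in simp)
  show ?thesis unfolding eq using d1 d2 by (simp add: dvd_add)
qed

lemma wt_dvd:
  fixes u v :: "'a::comm_ring_1 fps"
  assumes "fps_X dvd u" "fps_X dvd v"
  shows "fps_X ^ nat (j * j) dvd wt u v j"
proof -
  have "nat (j * j) = tz j + tz (- j)" using tz_sum[of j] by linarith
  then have "fps_X ^ nat (j * j) = fps_X ^ tz j * fps_X ^ tz (- j)" by (simp add: power_add)
  moreover have "fps_X ^ tz j dvd u ^ tz j" "fps_X ^ tz (- j) dvd v ^ tz (- j)"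
    using assms by (simp_all add: dvd_power_same)
  ultimately show ?thesis unfolding wt_def by (metis mult_dvd_mono)
qed

theorem jtp_trunc:
  fixes u v :: "'a::comm_ring_1 fps"
  assumes u: "fps_X dvd u" and v: "fps_X dvd v"
  shows "fps_X ^ Suc n dvd (Pq (u * v) n * FF u v n - (\<Sum>j\<in>{-int n..int n}. wt u v j))"
proof -
  define q where "q = u * v"
  have q: "fps_X dvd q" unfolding q_def using u by (rule dvd_mult2)
  have "Pq q n * FF u v n - (\<Sum>j\<in>{-int n..int n}. wt u v j)
      = (\<Sum>j\<in>{-int n..int n}. (Pq q n * gz q (int n + j) (int n - j) - 1) * wt u v j)"
    unfolding jtp_finite q_def[symmetric] sum_distrib_left sum_subtractf[symmetric]
    by (rule sum.cong) (simp_all add: algebra_simps)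
  also have "fps_X ^ Suc n dvd \<dots>"
  proof (rule dvd_sum)
    fix j assume j: "j \<in> {-int n..int n}"
    define m where "m = nat (int n - \<bar>j\<bar>)"
    have gzq: "gz q (int n + j) (int n - j) = gb q (nat (int n + j)) (nat (int n - j))"
      using j by (simp add: gz_def)
    have d1: "fps_X ^ Suc m dvd (Pq q n * gz q (int n + j) (int n - j) - 1)"
    proof (cases "j \<ge> 0")
      case True
      then have "m = nat (int n - j)" by (simp add: m_def)
      then show ?thesis unfolding gzq using j True keyK[OF q, of "nat (int n - j)" n "nat (int n + j)"] by auto
    next
      case False
      then have "m = nat (int n + j)" by (simp add: m_def)
      then show ?thesis unfolding gzq using j False keyK[OF q, of "nat (int n + j)" n "nat (int n - j)"] gb_sym[of q "nat (int n + j)"] by auto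
    qed
    have d2: "fps_X ^ nat (j * j) dvd wt u v j" by (rule wt_dvd[OF u v])
    have "fps_X ^ (Suc m + nat (j * j)) dvd (Pq q n * gz q (int n + j) (int n - j) - 1) * wt u v j"
      unfolding power_add using d1 d2 by (rule mult_dvd_mono)
    moreover have "Suc n \<le> Suc m + nat (j * j)"
    proof -
      have "\<bar>j\<bar> \<le> j * j"
      proof (cases "j = 0")
        case False
        then have "1 \<le> \<bar>j\<bar>" by simp
        then have "\<bar>j\<bar> * 1 \<le> \<bar>j\<bar> * \<bar>j\<bar>" by (intro mult_left_mono) auto
        moreover have "\<bar>j\<bar> * \<bar>j\<bar> = j * j" by (simp add: abs_mult[symmetric])
        ultimately show ?thesis by simp
      qed simp
      then show ?thesis using j unfolding m_def by linarith
    qed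
    ultimately show "fps_X ^ Suc n dvd (Pq q n * gz q (int n + j) (int n - j) - 1) * wt u v j"
      using le_imp_power_dvd dvd_trans by blast
  qed
  finally show ?thesis unfolding q_def .
qed


definition EE :: "nat \<Rightarrow> int fps" where "EE m = (\<Prod>k<m. 1 - fps_X ^ Suc k)"
definition DD :: "nat \<Rightarrow> int fps" where "DD m = (\<Prod>k<m. 1 + fps_X ^ (2 * Suc k))"
definition OD :: "nat \<Rightarrow> int fps" where "OD m = (\<Prod>k<m. 1 - fps_X ^ (2 * k + 1))"
definition F4 :: "nat \<Rightarrow> int fps" where "F4 m = (\<Prod>k<m. 1 - fps_X ^ (4 * Suc k))"

lemma Pq_Suc: "Pq r (Suc n) = Pq r n * (1 - r ^ Suc n)"
  by (simp add: Pq_def)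

lemma FF_Suc: "FF u v (Suc n) = FF u v n * ((1 + u ^ Suc n * v ^ n) * (1 + u ^ n * v ^ Suc n))"
  by (simp add: FF_def)

lemma pow_neg_X:
  "(- (fps_X ^ c :: int fps)) ^ a * (- (fps_X ^ d)) ^ b = (-1) ^ (a + b) * fps_X ^ (c * a + d * b)"
  by (simp add: power_minus[of "fps_X ^ c"] power_minus[of "fps_X ^ d"] power_add power_mult[symmetric] algebra_simps)

lemma neg_one_odd: "odd m \<Longrightarrow> (-1 :: int fps) ^ m = -1"
  by simp

lemma euler_prod: "Pq (- (fps_X ^ 2) * - (fps_X ^ 1)) N * FF (- (fps_X ^ 2)) (- (fps_X ^ 1)) N = EE (3 * N)"
proof (induction N)
  case 0 then show ?case by (simp add: Pq_def FF_def EE_def)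
next
  case (Suc N)
  have uv: "(- (fps_X ^ 2) * - (fps_X ^ 1) :: int fps) = fps_X ^ 3" by (simp only: minus_mult_minus power_add[symmetric]) simp
  have f1: "(- (fps_X ^ 2 :: int fps)) ^ Suc N * (- (fps_X ^ 1)) ^ N = - (fps_X ^ (3 * N + 2))"
  proof -
    have ee: "2 * (Suc N) + 1 * (N) = (3 * N + 2)" by simp
    show ?thesis unfolding pow_neg_X ee by (subst neg_one_odd) simp_all
  qed
  have f2: "(- (fps_X ^ 2 :: int fps)) ^ N * (- (fps_X ^ 1)) ^ Suc N = - (fps_X ^ (3 * N + 1))"
  proof -
    have ee: "2 * (N) + 1 * (Suc N) = (3 * N + 1)" by simp
    show ?thesis unfolding pow_neg_X ee by (subst neg_one_odd) simp_all
  qed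
  have f3: "(fps_X ^ 3 :: int fps) ^ Suc N = fps_X ^ (3 * N + 3)"
    by (simp only: power_mult[symmetric]) (rule arg_cong[where f="\<lambda>i. fps_X ^ i"], simp)
  have fac: "(1 - (- (fps_X ^ 2) * - (fps_X ^ 1) :: int fps) ^ Suc N) * ((1 + (- (fps_X ^ 2)) ^ Suc N * (- (fps_X ^ 1)) ^ N) * (1 + (- (fps_X ^ 2)) ^ N * (- (fps_X ^ 1)) ^ Suc N)) = (1 - fps_X ^ (3 * N + 3)) * ((1 - fps_X ^ (3 * N + 2)) * (1 - fps_X ^ (3 * N + 1)))"
    unfolding uv f1 f2 f3 by simp
  have "Pq (- (fps_X ^ 2) * - (fps_X ^ 1)) (Suc N) * FF (- (fps_X ^ 2)) (- (fps_X ^ 1)) (Suc N)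
     = (Pq (- (fps_X ^ 2) * - (fps_X ^ 1)) N * FF (- (fps_X ^ 2)) (- (fps_X ^ 1)) N)
       * ((1 - (- (fps_X ^ 2) * - (fps_X ^ 1)) ^ Suc N) * ((1 + (- (fps_X ^ 2)) ^ Suc N * (- (fps_X ^ 1)) ^ N) * (1 + (- (fps_X ^ 2)) ^ N * (- (fps_X ^ 1)) ^ Suc N)))"
    by (simp only: Pq_Suc FF_Suc mult_ac)
  also have "(Pq (- (fps_X ^ 2) * - (fps_X ^ 1) :: int fps) N * FF (- (fps_X ^ 2)) (- (fps_X ^ 1)) N) * ((1 - (- (fps_X ^ 2) * - (fps_X ^ 1)) ^ Suc N) * ((1 + (- (fps_X ^ 2)) ^ Suc N * (- (fps_X ^ 1)) ^ N) * (1 + (- (fps_X ^ 2)) ^ N * (- (fps_X ^ 1)) ^ Suc N))) = (Pq (- (fps_X ^ 2) * - (fps_X ^ 1)) N * FF (- (fps_X ^ 2)) (- (fps_X ^ 1)) N) * ((1 - fps_X ^ (3 * N + 3)) * ((1 - fps_X ^ (3 * N + 2)) * (1 - fps_X ^ (3 * N + 1))))"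
    by (simp only: fac)
  also have "\<dots> = EE (3 * Suc N)"
    unfolding Suc EE_def by (simp add: algebra_simps numeral_eq_Suc)
  finally show ?case .
qed

lemma theta_prod: "Pq (- (fps_X ^ 3) * - (fps_X ^ 1)) N * FF (- (fps_X ^ 3)) (- (fps_X ^ 1)) N = F4 N * OD (2 * N)"
proof (induction N)
  case 0 then show ?case by (simp add: Pq_def FF_def F4_def OD_def)
next
  case (Suc N)
  have uv: "(- (fps_X ^ 3) * - (fps_X ^ 1) :: int fps) = fps_X ^ 4" by (simp only: minus_mult_minus power_add[symmetric]) simp
  have f1: "(- (fps_X ^ 3 :: int fps)) ^ Suc N * (- (fps_X ^ 1)) ^ N = - (fps_X ^ (2 * (2 * N + 1) + 1))"
  proof -
    have ee: "3 * (Suc N) + 1 * (N) = (2 * (2 * N + 1) + 1)" by simp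
    show ?thesis unfolding pow_neg_X ee by (subst neg_one_odd) simp_all
  qed
  have f2: "(- (fps_X ^ 3 :: int fps)) ^ N * (- (fps_X ^ 1)) ^ Suc N = - (fps_X ^ (2 * (2 * N) + 1))"
  proof -
    have ee: "3 * (N) + 1 * (Suc N) = (2 * (2 * N) + 1)" by simp
    show ?thesis unfolding pow_neg_X ee by (subst neg_one_odd) simp_all
  qed
  have f3: "(fps_X ^ 4 :: int fps) ^ Suc N = fps_X ^ (4 * Suc N)"
    by (rule power_mult[symmetric])
  have fac: "(1 - (- (fps_X ^ 3) * - (fps_X ^ 1) :: int fps) ^ Suc N) * ((1 + (- (fps_X ^ 3)) ^ Suc N * (- (fps_X ^ 1)) ^ N) * (1 + (- (fps_X ^ 3)) ^ N * (- (fps_X ^ 1)) ^ Suc N)) = (1 - fps_X ^ (4 * Suc N)) * ((1 - fps_X ^ (2 * (2 * N + 1) + 1)) * (1 - fps_X ^ (2 * (2 * N) + 1)))"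
    unfolding uv f1 f2 f3 by simp
  have "Pq (- (fps_X ^ 3) * - (fps_X ^ 1)) (Suc N) * FF (- (fps_X ^ 3)) (- (fps_X ^ 1)) (Suc N)
     = (Pq (- (fps_X ^ 3) * - (fps_X ^ 1)) N * FF (- (fps_X ^ 3)) (- (fps_X ^ 1)) N)
       * ((1 - (- (fps_X ^ 3) * - (fps_X ^ 1)) ^ Suc N) * ((1 + (- (fps_X ^ 3)) ^ Suc N * (- (fps_X ^ 1)) ^ N) * (1 + (- (fps_X ^ 3)) ^ N * (- (fps_X ^ 1)) ^ Suc N)))"
    by (simp only: Pq_Suc FF_Suc mult_ac)
  also have "(Pq (- (fps_X ^ 3) * - (fps_X ^ 1) :: int fps) N * FF (- (fps_X ^ 3)) (- (fps_X ^ 1)) N) * ((1 - (- (fps_X ^ 3) * - (fps_X ^ 1)) ^ Suc N) * ((1 + (- (fps_X ^ 3)) ^ Suc N * (- (fps_X ^ 1)) ^ N) * (1 + (- (fps_X ^ 3)) ^ N * (- (fps_X ^ 1)) ^ Suc N))) = (Pq (- (fps_X ^ 3) * - (fps_X ^ 1)) N * FF (- (fps_X ^ 3)) (- (fps_X ^ 1)) N) * ((1 - fps_X ^ (4 * Suc N)) * ((1 - fps_X ^ (2 * (2 * N + 1) + 1)) * (1 - fps_X ^ (2 * (2 * N) + 1))))"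
    by (simp only: fac)
  also have "\<dots> = F4 (Suc N) * OD (2 * Suc N)"
    unfolding Suc F4_def OD_def by (simp add: algebra_simps)
  finally show ?case .
qed

lemma DE_prod: "DD m * EE (2 * m) = F4 m * OD m"
proof (induction m)
  case 0 then show ?case by (simp add: DD_def EE_def F4_def OD_def)
next
  case (Suc m)
  have e: "EE (2 * Suc m) = EE (2 * m) * ((1 - fps_X ^ (2 * m + 1)) * (1 - fps_X ^ (2 * Suc m)))"
    unfolding EE_def by (simp add: algebra_simps)
  have p: "(1 + fps_X ^ (2 * Suc m) :: int fps) * (1 - fps_X ^ (2 * Suc m)) = 1 - fps_X ^ (4 * Suc m)"
  proof -
    have "(fps_X ^ (2 * Suc m) :: int fps) * fps_X ^ (2 * Suc m) = fps_X ^ (4 * Suc m)"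
      by (simp only: power_add[symmetric]) (rule arg_cong[where f="\<lambda>i. fps_X ^ i"], simp)
    then show ?thesis by (simp add: algebra_simps)
  qed
  have "DD (Suc m) * EE (2 * Suc m) = (DD m * EE (2 * m)) * (1 - fps_X ^ (2 * m + 1)) * ((1 + fps_X ^ (2 * Suc m)) * (1 - fps_X ^ (2 * Suc m)))"
    unfolding e DD_def by (simp add: algebra_simps)
  also have "\<dots> = F4 (Suc m) * OD (Suc m)"
    unfolding Suc p F4_def OD_def by (simp add: algebra_simps)
  finally show ?case .
qed

lemma X_dvd_X_pow: "fps_X dvd (fps_X ^ Suc k :: 'a::comm_ring_1 fps)"
  by simp

lemma EE_mono_dvd:
  assumes "m \<le> m'"
  shows "fps_X ^ Suc m dvd (EE m' - EE m)"
proof -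
  have split0: "EE m * (\<Prod>k\<in>{m..<m'}. 1 - fps_X ^ Suc k) = EE m'"
    unfolding EE_def using prod.atLeastLessThan_concat[of 0 m m' "\<lambda>k. 1 - fps_X ^ Suc k"] assms
    by (simp add: atLeast0LessThan)
  note split = split0[symmetric]
  have "fps_X ^ Suc m dvd ((\<Prod>k\<in>{m..<m'}. 1 - fps_X ^ Suc k) - 1 :: int fps)"
    by (rule Xdvd_prod_one_minus, simp) (auto intro: le_imp_power_dvd)
  then have "fps_X ^ Suc m dvd EE m * ((\<Prod>k\<in>{m..<m'}. 1 - fps_X ^ Suc k) - 1)" by (rule dvd_mult)
  then show ?thesis unfolding split by (simp add: algebra_simps)
qed

lemma F4_mono_dvd:
  assumes "m \<le> m'"
  shows "fps_X ^ Suc m dvd (F4 m' - F4 m)"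
proof -
  have split0: "F4 m * (\<Prod>k\<in>{m..<m'}. 1 - fps_X ^ (4 * Suc k)) = F4 m'"
    unfolding F4_def using prod.atLeastLessThan_concat[of 0 m m' "\<lambda>k. 1 - fps_X ^ (4 * Suc k)"] assms
    by (simp add: atLeast0LessThan)
  note split = split0[symmetric]
  have "fps_X ^ Suc m dvd ((\<Prod>k\<in>{m..<m'}. 1 - fps_X ^ (4 * Suc k)) - 1 :: int fps)"
    by (rule Xdvd_prod_one_minus, simp, rule le_imp_power_dvd, simp)
  then have "fps_X ^ Suc m dvd F4 m * ((\<Prod>k\<in>{m..<m'}. 1 - fps_X ^ (4 * Suc k)) - 1)" by (rule dvd_mult)
  then show ?thesis unfolding split by (simp add: algebra_simps)
qed

definition PentS :: "nat \<Rightarrow> int fps" where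
  "PentS N = (\<Sum>j\<in>{-int N..int N}. wt (- (fps_X ^ 2)) (- (fps_X ^ 1)) j)"
definition ThetaS :: "nat \<Rightarrow> int fps" where
  "ThetaS N = (\<Sum>j\<in>{-int N..int N}. wt (- (fps_X ^ 3)) (- (fps_X ^ 1)) j)"

lemma main_cong: "fps_X ^ Suc N dvd (DD (2 * N) * PentS N - ThetaS N)"
proof -
  have h1: "fps_X ^ Suc N dvd (EE (3 * N) - PentS N)"
    using jtp_trunc[of "- (fps_X ^ 2) :: int fps" "- (fps_X ^ 1)" N] unfolding euler_prod PentS_def
    by (simp add: power_Suc)
  have h2: "fps_X ^ Suc N dvd (EE (2 * (2 * N)) - EE (3 * N))"
    using EE_mono_dvd[of "3 * N" "2 * (2 * N)"] le_imp_power_dvd[of "Suc N" "Suc (3 * N)" "fps_X :: int fps"]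
    by (auto intro: dvd_trans)
  have h3: "fps_X ^ Suc N dvd (F4 (2 * N) - F4 N)"
    using F4_mono_dvd[of N "2 * N"] by simp
  have h4: "fps_X ^ Suc N dvd (F4 N * OD (2 * N) - ThetaS N)"
    using jtp_trunc[of "- (fps_X ^ 3) :: int fps" "- (fps_X ^ 1)" N] unfolding theta_prod ThetaS_def
    by (simp add: power_Suc)
  have eq: "DD (2 * N) * PentS N - ThetaS N =
      DD (2 * N) * (EE (2 * (2 * N)) - EE (3 * N)) * (-1) + DD (2 * N) * (EE (3 * N) - PentS N) * (-1)
      + (F4 (2 * N) - F4 N) * OD (2 * N) + (F4 N * OD (2 * N) - ThetaS N)"
    using DE_prod[of "2 * N"] by (simp add: algebra_simps)
  show ?thesis unfolding eq using h1 h2 h3 h4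
    by (intro dvd_add dvd_mult dvd_mult2) auto
qed


lemma prod_coeff:
  fixes g :: "nat \<Rightarrow> nat"
  assumes "finite S"
  shows "fps_nth (\<Prod>k\<in>S. 1 + fps_X ^ g k :: int fps) i = int (card {A. A \<subseteq> S \<and> sum g A = i})"
  using assms
proof (induction S arbitrary: i rule: finite_induct)
  case empty
  have "{A. A \<subseteq> {} \<and> sum g A = i} = (if i = 0 then {{}} else {})" by auto
  then show ?case by simp
next
  case (insert k S)
  define P where "P = (\<Prod>k\<in>S. 1 + fps_X ^ g k :: int fps)"
  have "(\<Prod>k\<in>insert k S. 1 + fps_X ^ g k :: int fps) = P + fps_X ^ g k * P"
    using insert(1,2) by (simp add: P_def algebra_simps)
  then have c1: "fps_nth (\<Prod>k\<in>insert k S. 1 + fps_X ^ g k :: int fps) i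
      = fps_nth P i + (if i < g k then 0 else fps_nth P (i - g k))"
    by (simp add: fps_X_power_mult_nth)
  define L where "L = {A. A \<subseteq> S \<and> sum g A = i}"
  define R where "R = {B. B \<subseteq> S \<and> sum g B + g k = i}"
  have seteq: "{A. A \<subseteq> insert k S \<and> sum g A = i} = L \<union> insert k ` R"
  proof (intro set_eqI iffI)
    fix A assume A: "A \<in> {A. A \<subseteq> insert k S \<and> sum g A = i}"
    show "A \<in> L \<union> insert k ` R"
    proof (cases "k \<in> A")
      case False
      then show ?thesis using A by (auto simp: L_def)
    next
      case True
      have fin: "finite (A - {k})" using A insert(1) by (auto intro: finite_subset)
      have "A = insert k (A - {k})" using True by auto
      moreover have "sum g (A - {k}) + g k = i"
      proof -
        have "finite A" using fin by simp
        then have "sum g A = g k + sum g (A - {k})" using True by (rule sum.remove)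
        then show ?thesis using A by simp
      qed
      moreover have "A - {k} \<subseteq> S" using A by auto
      ultimately show ?thesis unfolding R_def by blast
    qed
  next
    fix A assume A: "A \<in> L \<union> insert k ` R"
    show "A \<in> {A. A \<subseteq> insert k S \<and> sum g A = i}"
    proof (cases "A \<in> L")
      case True then show ?thesis by (auto simp: L_def)
    next
      case False
      then obtain B where B: "B \<in> R" "A = insert k B" using A by auto
      have "finite B" "k \<notin> B" using B insert(1,2) by (auto simp: R_def intro: finite_subset)
      then show ?thesis using B by (auto simp: R_def)
    qed
  qed
  have finL: "finite L" unfolding L_def using insert(1) by (auto intro: finite_subset[of _ "Pow S"])
  have finR: "finite R" unfolding R_def using insert(1) by (auto intro: finite_subset[of _ "Pow S"])
  have disj: "L \<inter> insert k ` R = {}" unfolding L_def using insert(2) by auto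
  have inj: "inj_on (insert k) R"
    unfolding R_def inj_on_def using insert(2) by (metis (no_types, lifting) insert_ident mem_Collect_eq subset_iff)
  have cR: "card R = (if i < g k then 0 else card {B. B \<subseteq> S \<and> sum g B = i - g k})"
  proof (cases "i < g k")
    case True then have "R = {}" unfolding R_def by auto
    then show ?thesis using True by simp
  next
    case False then have "R = {B. B \<subseteq> S \<and> sum g B = i - g k}" unfolding R_def by auto
    then show ?thesis using False by simp
  qed
  have "card {A. A \<subseteq> insert k S \<and> sum g A = i} = card L + card R"
    unfolding seteq using finL finR disj inj by (simp add: card_Un_disjoint card_image)
  then show ?case unfolding c1 P_def insert(3) cR L_def by simp
qed

lemma DD_coeff:
  assumes "i div 2 \<le> m"
  shows "fps_nth (DD m) i = (if even i then int (qd (i div 2)) else 0)"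
proof -
  have "DD m = (\<Prod>k\<in>{1..m}. 1 + fps_X ^ (2 * k))"
    unfolding DD_def using prod.atLeast1_atMost_eq[of "\<lambda>k. 1 + fps_X ^ (2 * k) :: int fps" m] by simp
  then have c: "fps_nth (DD m) i = int (card {A. A \<subseteq> {1..m} \<and> sum (\<lambda>k. 2 * k) A = i})"
    using prod_coeff[of "{1..m}" "\<lambda>k. 2 * k" i] by simp
  have s2: "sum (\<lambda>k. 2 * k) A = 2 * \<Sum>A" for A :: "nat set"
    by (simp add: sum_distrib_left)
  show ?thesis
  proof (cases "even i")
    case False
    then have "{A. A \<subseteq> {1..m} \<and> sum (\<lambda>k. 2 * k) A = i} = {}" unfolding s2 by auto
    then show ?thesis using c False by simp
  next
    case True
    then obtain t where t: "i = 2 * t" by blast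
    have "{A. A \<subseteq> {1..m} \<and> sum (\<lambda>k. 2 * k) A = i} = {A. A \<subseteq> {1..t} \<and> \<Sum>A = t}"
    proof (intro set_eqI iffI)
      fix A assume A: "A \<in> {A. A \<subseteq> {1..m} \<and> sum (\<lambda>k. 2 * k) A = i}"
      then have fin: "finite A" by (auto intro: finite_subset)
      have sA: "\<Sum>A = t" using A unfolding s2 t by auto
      have "x \<le> t" if "x \<in> A" for x
        using member_le_sum[of x A "\<lambda>x. x"] that fin sA by auto
      then show "A \<in> {A. A \<subseteq> {1..t} \<and> \<Sum>A = t}" using A sA by auto
    next
      fix A assume A: "A \<in> {A. A \<subseteq> {1..t} \<and> \<Sum>A = t}"
      then show "A \<in> {A. A \<subseteq> {1..m} \<and> sum (\<lambda>k. 2 * k) A = i}"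
        using assms unfolding s2 t by auto
    qed
    then show ?thesis using c True t by (simp add: qd_def)
  qed
qed


lemma neg1_pow_fps: "(-1 :: int fps) ^ m = fps_const ((-1) ^ m)"
  by (induction m) simp_all

lemma wt_form:
  "wt (- (fps_X ^ c)) (- (fps_X ^ d)) j = fps_const ((-1) ^ (tz j + tz (- j))) * (fps_X ^ (c * tz j + d * tz (- j)) :: int fps)"
  unfolding wt_def pow_neg_X neg1_pow_fps ..

lemma pent_coeff:
  "fps_nth (DD M * PentS N) i = (\<Sum>j\<in>{-int N..int N}. (-1) ^ (tz j + tz (- j)) *
      (if i < 2 * tz j + 1 * tz (- j) then 0 else fps_nth (DD M) (i - (2 * tz j + 1 * tz (- j)))))"
  unfolding PentS_def sum_distrib_left fps_sum_nth wt_form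
proof (rule sum.cong[OF refl])
  fix j
  show "fps_nth (DD M * (fps_const ((-1) ^ (tz j + tz (- j))) * fps_X ^ (2 * tz j + 1 * tz (- j)))) i =
    (-1) ^ (tz j + tz (- j)) * (if i < 2 * tz j + 1 * tz (- j) then 0 else fps_nth (DD M) (i - (2 * tz j + 1 * tz (- j))))"
    by (simp only: mult.left_commute[of "DD M"] fps_mult_left_const_nth fps_X_power_mult_right_nth)
qed

lemma theta_coeff:
  "fps_nth (ThetaS N) i = (\<Sum>j\<in>{-int N..int N}. (-1) ^ (tz j + tz (- j)) *
      (if i = 3 * tz j + 1 * tz (- j) then 1 else 0))"
  unfolding ThetaS_def fps_sum_nth wt_form
  by (rule sum.cong[OF refl]) (simp only: fps_mult_left_const_nth fps_X_power_nth)

lemma coeff_eq: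
  assumes "i \<le> N"
  shows "fps_nth (DD (2 * N) * PentS N) i = fps_nth (ThetaS N) i"
proof -
  have "fps_nth (DD (2 * N) * PentS N - ThetaS N) i = 0"
    using Xdvd_nth[OF main_cong[of N], of i] assms by simp
  then show ?thesis by simp
qed

lemma tz2: "2 * int (tz j) = j * (j + 1)"
proof (cases "even j")
  case True
  then obtain k where k: "j = 2 * k" by blast
  have "j * (j + 1) = 2 * (k * (2 * k + 1))" unfolding k by algebra
  then show ?thesis unfolding tz_int by simp
next
  case False
  then obtain k where k: "j = 2 * k + 1" using oddE by blast
  have "j * (j + 1) = 2 * ((2 * k + 1) * (k + 1))" unfolding k by algebra
  then show ?thesis unfolding tz_int by simp
qed

lemma sign_tz: "((-1::int) ^ (tz j + tz (- j))) = (-1) ^ nat \<bar>j\<bar>"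
proof -
  have "int (tz j + tz (- j)) = j * j" using tz_sum[of j] by simp
  then have e: "tz j + tz (- j) = nat \<bar>j\<bar> * nat \<bar>j\<bar>"
    by (metis abs_mult_self_eq nat_int nat_mult_distrib abs_ge_zero)
  show ?thesis unfolding e by (cases "even (nat \<bar>j\<bar>)") auto
qed


lemma f_inj:
  fixes a b :: int
  assumes "2 * a * a + a = 2 * b * b + b"
  shows "a = b"
proof -
  have "(a - b) * (2 * a + 2 * b + 1) = (2 * a * a + a) - (2 * b * b + b)"
    by (simp add: algebra_simps)
  then have "(a - b) * (2 * a + 2 * b + 1) = 0" using assms by simp
  moreover have "2 * a + 2 * b + 1 \<noteq> 0" by presburger
  ultimately show ?thesis by simp
qed

lemma etheta: "int (3 * tz j + 1 * tz (- j)) = 2 * j * j + j"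
proof -
  have "2 * int (tz j) = j * (j + 1)" "2 * int (tz (- j)) = (- j) * (- j + 1)" by (rule tz2)+
  then have "2 * int (3 * tz j + 1 * tz (- j)) = 2 * (2 * j * j + j)" by (simp add: algebra_simps)
  then show ?thesis by simp
qed

lemma abs_le_f: "\<bar>j\<bar> \<le> 2 * j * j + (j::int)"
proof -
  have "\<bar>j\<bar> \<le> j * j"
  proof (cases "j = 0")
    case False
    then have "1 \<le> \<bar>j\<bar>" by simp
    then have "\<bar>j\<bar> * 1 \<le> \<bar>j\<bar> * \<bar>j\<bar>" by (intro mult_left_mono) auto
    moreover have "\<bar>j\<bar> * \<bar>j\<bar> = j * j" by (simp add: abs_mult[symmetric])
    ultimately show ?thesis by simp
  qed simp
  then show ?thesis by linarith
qed

lemma sum_single: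
  assumes "finite I" "j0 \<in> I" "\<And>j. j \<in> I \<Longrightarrow> P j \<longleftrightarrow> j = j0"
  shows "(\<Sum>j\<in>I. s j * (if P j then 1 else 0)) = (s j0 :: int)"
proof -
  have "(\<Sum>j\<in>I. s j * (if P j then 1 else 0)) = (\<Sum>j\<in>I. if j = j0 then s j0 else 0)"
    by (rule sum.cong) (use assms in auto)
  also have "\<dots> = s j0" using assms by simp
  finally show ?thesis .
qed

lemma tri_4k: "tri (4*k+1) = (4*k+1)*(2*k+1)" "tri (4*k+2) = (2*k+1)*(4*k+3)"
  "tri (4*k+3) = (4*k+3)*(2*k+2)" "tri (4*k+4) = (2*k+2)*(4*k+5)"
proof -
  have "(4*k+1)*(4*k+1+1) = 2*((4*k+1)*(2*k+1))" by (simp add: algebra_simps)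
  then show "tri (4*k+1) = (4*k+1)*(2*k+1)" unfolding tri_def by simp
  have "(4*k+2)*(4*k+2+1) = 2*((2*k+1)*(4*k+3))" by (simp add: algebra_simps)
  then show "tri (4*k+2) = (2*k+1)*(4*k+3)" unfolding tri_def by simp
  have "(4*k+3)*(4*k+3+1) = 2*((4*k+3)*(2*k+2))" by (simp add: algebra_simps)
  then show "tri (4*k+3) = (4*k+3)*(2*k+2)" unfolding tri_def by simp
  have "(4*k+4)*(4*k+4+1) = 2*((2*k+2)*(4*k+5))" by (simp add: algebra_simps)
  then show "tri (4*k+4) = (2*k+2)*(4*k+5)" unfolding tri_def by simp
qed

lemma theta_val:
  assumes n: "n \<ge> 1" and N: "2 * n \<le> N"
  shows "(\<Sum>j\<in>{-int N..int N}. (-1::int) ^ (tz j + tz (- j)) *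
      (if 2 * n = 3 * tz j + 1 * tz (- j) then 1 else 0)) = Lterm n"
proof -
  define I where "I = {-int N..int N}"
  have P: "(2 * n = 3 * tz j + 1 * tz (- j)) \<longleftrightarrow> int (2 * n) = 2 * j * j + j" for j
    using etheta[of j] by linarith
  have single: "(\<Sum>j\<in>I. (-1::int) ^ (tz j + tz (- j)) * (if 2 * n = 3 * tz j + 1 * tz (- j) then 1 else 0))
      = (-1) ^ nat \<bar>j0\<bar>" if j0: "int (2 * n) = 2 * j0 * j0 + j0" for j0
  proof -
    have "j0 \<in> I" using abs_le_f[of j0] j0 N unfolding I_def by auto
    moreover have "j \<in> I \<Longrightarrow> (2 * n = 3 * tz j + 1 * tz (- j)) \<longleftrightarrow> j = j0" for j
      unfolding P using j0 f_inj[of j j0] by auto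
    ultimately show ?thesis unfolding sign_tz[symmetric] by (intro sum_single) (auto simp: I_def)
  qed
  show ?thesis
  proof (cases "\<exists>k. 2 * n = tri (4*k+1) \<or> 2 * n = tri (4*k+2)")
    case True
    then have L: "Lterm n = -1" by (simp add: Lterm_def)
    from True obtain k where k: "2 * n = tri (4*k+1) \<or> 2 * n = tri (4*k+2)" by blast
    then show ?thesis
    proof
      assume h: "2 * n = tri (4*k+1)"
      have jj0: "int (2 * n) = 2 * (-(2*int k+1)) * (-(2*int k+1)) + (-(2*int k+1))"
        unfolding h tri_4k by (simp add: algebra_simps)
      show ?thesis using single[OF jj0] unfolding L I_def by (simp add: nat_add_distrib nat_mult_distrib)
    next
      assume h: "2 * n = tri (4*k+2)"
      have jj0: "int (2 * n) = 2 * (2*int k+1) * (2*int k+1) + (2*int k+1)"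
        unfolding h tri_4k by (simp add: algebra_simps)
      show ?thesis using single[OF jj0] unfolding L I_def by (simp add: nat_add_distrib nat_mult_distrib)
    qed
  next
    case False
    note F1 = this
    show ?thesis
    proof (cases "\<exists>k. 2 * n = tri (4*k+3) \<or> 2 * n = tri (4*k+4)")
      case True
      then have L: "Lterm n = 1" using F1 by (simp add: Lterm_def)
      from True obtain k where k: "2 * n = tri (4*k+3) \<or> 2 * n = tri (4*k+4)" by blast
      then show ?thesis
      proof
        assume h: "2 * n = tri (4*k+3)"
        have jj0: "int (2 * n) = 2 * (-(2*int k+2)) * (-(2*int k+2)) + (-(2*int k+2))"
          unfolding h tri_4k by (simp add: algebra_simps)
        show ?thesis using single[OF jj0] unfolding L I_def by (simp add: nat_add_distrib nat_mult_distrib)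
      next
        assume h: "2 * n = tri (4*k+4)"
        have jj0: "int (2 * n) = 2 * (2*int k+2) * (2*int k+2) + (2*int k+2)"
          unfolding h tri_4k by (simp add: algebra_simps)
        show ?thesis using single[OF jj0] unfolding L I_def by (simp add: nat_add_distrib nat_mult_distrib)
      qed
    next
      case False
      note F2 = this
      have L: "Lterm n = 0" using F1 F2 by (simp add: Lterm_def)
      have none: "\<not> (int (2 * n) = 2 * j * j + j)" for j
      proof
        assume j: "int (2 * n) = 2 * j * j + j"
        have "j \<noteq> 0" using j n by auto
        obtain m where m: "nat \<bar>j\<bar> = m" by blast
        have m1: "m \<ge> 1" using m \<open>j \<noteq> 0\<close> by auto
        have "m = 2 * ((m - 1) div 2) + 1 \<or> m = 2 * ((m - 1) div 2) + 2" using m1 by presburger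
        then obtain k where k: "m = 2 * k + 1 \<or> m = 2 * k + 2" by blast
        have jj: "j = int m \<or> j = - int m" using m by auto
        show False
        proof -
          { assume a: "m = 2 * k + 1" "j = int m"
            have jv: "j = (2 * int k + 1)" using a by simp
            have "int (2 * n) = int (tri (4*k+2))" using j unfolding jv tri_4k by (simp add: algebra_simps)
            then have "2 * n = tri (4*k+2)" by (simp only: of_nat_eq_iff)
            then have False using F1 by blast }
          moreover
          { assume a: "m = 2 * k + 1" "j = - int m"
            have jv: "j = - (2 * int k + 1)" using a by simp
            have "int (2 * n) = int (tri (4*k+1))" using j unfolding jv tri_4k by (simp add: algebra_simps)
            then have "2 * n = tri (4*k+1)" by (simp only: of_nat_eq_iff)
            then have False using F1 by blast }
          moreover
          { assume a: "m = 2 * k + 2" "j = int m"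
            have jv: "j = (2 * int k + 2)" using a by simp
            have "int (2 * n) = int (tri (4*k+4))" using j unfolding jv tri_4k by (simp add: algebra_simps)
            then have "2 * n = tri (4*k+4)" by (simp only: of_nat_eq_iff)
            then have False using F2 by blast }
          moreover
          { assume a: "m = 2 * k + 2" "j = - int m"
            have jv: "j = - (2 * int k + 2)" using a by simp
            have "int (2 * n) = int (tri (4*k+3))" using j unfolding jv tri_4k by (simp add: algebra_simps)
            then have "2 * n = tri (4*k+3)" by (simp only: of_nat_eq_iff)
            then have False using F2 by blast }
          ultimately show False using k jj by blast
        qed
      qed
      have "(\<Sum>j\<in>I. (-1::int) ^ (tz j + tz (- j)) * (if 2 * n = 3 * tz j + 1 * tz (- j) then 1 else 0)) = 0"
        using none unfolding P by simp
      then show ?thesis unfolding L I_def .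
    qed
  qed
qed


lemma sum_sym_int:
  "(\<Sum>j\<in>{-int N..int N}. h j) = h 0 + (\<Sum>k\<in>{1..N}. h (int k) + h (- int k))"
proof (induction N)
  case 0 then show ?case by simp
next
  case (Suc N)
  have e: "{- int (Suc N)..int (Suc N)} = insert (int (Suc N)) (insert (- int (Suc N)) {-int N..int N})"
    by auto
  have "(\<Sum>j\<in>{- int (Suc N)..int (Suc N)}. h j) = h (int (Suc N)) + (h (- int (Suc N)) + (\<Sum>j\<in>{-int N..int N}. h j))"
    unfolding e by (subst sum.insert) (auto simp: sum.insert)
  also have "\<dots> = h 0 + (\<Sum>k\<in>{1..Suc N}. h (int k) + h (- int k))"
    unfolding Suc by (simp add: algebra_simps)
  finally show ?case .
qed

definition Tn :: "nat \<Rightarrow> nat \<Rightarrow> nat" where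
  "Tn n p = (if 2 * n < p then 0 else if even (2 * n - p) then qd ((2 * n - p) div 2) else 0)"

lemma q_T: "q ((2 * of_nat n - of_nat p) / 2) = Tn n p"
proof (cases "2 * n < p")
  case True
  then have "(2 * of_nat n - of_nat p) / 2 < (0::rat)"
    by (simp add: of_nat_less_iff[symmetric, where 'a=rat])
  then show ?thesis using True by (simp add: q_def Tn_def)
next
  case False
  define d where "d = 2 * n - p"
  have x: "(2 * of_nat n - of_nat p) / 2 = (of_nat d / 2 :: rat)"
    using False unfolding d_def by (simp add: of_nat_diff)
  show ?thesis
  proof (cases "even d")
    case True
    then obtain t where t: "d = 2 * t" by blast
    have "(of_nat d / 2 :: rat) = of_nat t" unfolding t by simp
    then show ?thesis unfolding x using False True t by (simp add: q_def Tn_def d_def[symmetric])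
  next
    case odd: False
    have "(of_nat d / 2 :: rat) \<notin> \<int>"
    proof
      assume "(of_nat d / 2 :: rat) \<in> \<int>"
      then obtain z where z: "(of_nat d / 2 :: rat) = of_int z" by (auto elim: Ints_cases)
      then have "(of_int (int d) :: rat) = of_int (2 * z)" by (simp add: field_simps)
      then have "int d = 2 * z" by (simp only: of_int_eq_iff)
      then have "even (int d)" by simp
      then show False using odd by simp
    qed
    then show ?thesis unfolding x using False odd by (simp add: q_def Tn_def d_def[symmetric])
  qed
qed

lemma tz_rat: "2 * (of_nat (tz j) :: rat) = of_int j * (of_int j + 1)"
proof -
  have "(of_int (2 * int (tz j)) :: rat) = of_int (j * (j + 1))" by (simp only: tz2)
  then show ?thesis by simp
qed

lemma P5_eq: "P5 k = of_nat (2 * tz (- int k) + 1 * tz (int k))"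
proof -
  have a: "2 * (of_nat (tz (- int k)) :: rat) = - of_nat k * (- of_nat k + 1)" using tz_rat[of "- int k"] by simp
  have b: "2 * (of_nat (tz (int k)) :: rat) = of_nat k * (of_nat k + 1)" using tz_rat[of "int k"] by simp
  have "(of_nat (2 * tz (- int k) + 1 * tz (int k)) :: rat) = (2 * (2 * of_nat (tz (- int k))) + 2 * of_nat (tz (int k))) / 2"
    by simp
  also have "\<dots> = (2 * (- of_nat k * (- of_nat k + 1)) + (of_nat k * (of_nat k + 1))) / 2" unfolding a b ..
  also have "2 * (- of_nat k * (- of_nat k + 1)) + (of_nat k * (of_nat k + 1)) = (of_nat k * (3 * of_nat k - 1) :: rat)" by algebra
  finally show ?thesis unfolding P5_def by simp
qed

lemma Q5_eq: "Q5 k = of_nat (2 * tz (int k) + 1 * tz (- int k))"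
proof -
  have a: "2 * (of_nat (tz (int k)) :: rat) = of_nat k * (of_nat k + 1)" using tz_rat[of "int k"] by simp
  have b: "2 * (of_nat (tz (- int k)) :: rat) = - of_nat k * (- of_nat k + 1)" using tz_rat[of "- int k"] by simp
  have "(of_nat (2 * tz (int k) + 1 * tz (- int k)) :: rat) = (2 * (2 * of_nat (tz (int k))) + 2 * of_nat (tz (- int k))) / 2"
    by simp
  also have "\<dots> = (2 * (of_nat k * (of_nat k + 1)) + (- of_nat k * (- of_nat k + 1))) / 2" unfolding a b ..
  also have "2 * (of_nat k * (of_nat k + 1)) + (- of_nat k * (- of_nat k + 1)) = (of_nat k * (3 * of_nat k + 1) :: rat)" by algebra
  finally show ?thesis unfolding Q5_def by simp
qed

lemma tz_ge: "k \<le> tz (int k)"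
proof -
  have "2 * int (tz (int k)) = int k * (int k + 1)" by (rule tz2)
  moreover have "int k * 2 \<le> int k * (int k + 1)"
    by (cases "k = 0") (auto intro: mult_left_mono)
  ultimately show ?thesis by auto
qed


theorem theorem2p5:
  fixes n :: nat
  assumes "n \<ge> 1"
  shows "(\<lambda>k. (-1::real) ^ (k + 2) *
            (real (q ((2 * of_nat n - P5 (Suc k)) / 2)) + real (q ((2 * of_nat n - Q5 (Suc k)) / 2))))
         sums (real (qd n) - real_of_int (Lterm n))"
proof -
  define N where "N = 2 * n"
  define Pe where "Pe k = 2 * tz (- int k) + 1 * tz (int k)" for k
  define Qe where "Qe k = 2 * tz (int k) + 1 * tz (- int k)" for k
  define a where "a k = (-1::int) ^ k * (int (Tn n (Qe k)) + int (Tn n (Pe k)))" for k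
  define h where "h j = (-1::int) ^ (tz j + tz (- j)) * int (Tn n (2 * tz j + 1 * tz (- j)))" for j
  have key: "int (qd n) + (\<Sum>k\<in>{1..N}. a k) = Lterm n"
  proof -
    have "fps_nth (DD (2 * N) * PentS N) (2 * n) = fps_nth (ThetaS N) (2 * n)"
      by (rule coeff_eq) (simp add: N_def)
    then have A: "(\<Sum>j\<in>{-int N..int N}. (-1) ^ (tz j + tz (- j)) *
      (if 2 * n < 2 * tz j + 1 * tz (- j) then 0 else fps_nth (DD (2 * N)) (2 * n - (2 * tz j + 1 * tz (- j))))) = Lterm n"
      unfolding pent_coeff theta_coeff using theta_val[OF assms, of N] by (simp add: N_def)
    have B: "(\<Sum>j\<in>{-int N..int N}. (-1) ^ (tz j + tz (- j)) *
      (if 2 * n < 2 * tz j + 1 * tz (- j) then 0 else fps_nth (DD (2 * N)) (2 * n - (2 * tz j + 1 * tz (- j)))))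
      = (\<Sum>j\<in>{-int N..int N}. h j)"
    proof (rule sum.cong[OF refl])
      fix j
      show "(-1) ^ (tz j + tz (- j)) *
        (if 2 * n < 2 * tz j + 1 * tz (- j) then 0 else fps_nth (DD (2 * N)) (2 * n - (2 * tz j + 1 * tz (- j)))) = h j"
        unfolding h_def Tn_def by (auto simp: DD_coeff N_def)
    qed
    have C: "(\<Sum>j\<in>{-int N..int N}. h j) = int (qd n) + (\<Sum>k\<in>{1..N}. a k)"
      unfolding sum_sym_int
    proof -
      have "h 0 = int (qd n)" by (simp add: h_def Tn_def tz_def)
      moreover have "h (int k) + h (- int k) = a k" for k
        unfolding h_def a_def Pe_def Qe_def sign_tz by (simp add: algebra_simps)
      ultimately show "h 0 + (\<Sum>k\<in>{1..N}. h (int k) + h (- int k)) = int (qd n) + (\<Sum>k\<in>{1..N}. a k)"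
        by simp
    qed
    show ?thesis using A B C by simp
  qed
  define f where "f k = (-1::real) ^ (k + 2) *
            (real (q ((2 * of_nat n - P5 (Suc k)) / 2)) + real (q ((2 * of_nat n - Q5 (Suc k)) / 2)))" for k
  have fk: "f k = - real_of_int (a (Suc k))" for k
  proof -
    have "q ((2 * of_nat n - P5 (Suc k)) / 2) = Tn n (Pe (Suc k))" unfolding P5_eq Pe_def by (rule q_T)
    moreover have "q ((2 * of_nat n - Q5 (Suc k)) / 2) = Tn n (Qe (Suc k))" unfolding Q5_eq Qe_def by (rule q_T)
    ultimately show ?thesis unfolding f_def a_def by (simp add: algebra_simps)
  qed
  have zero: "a (Suc k) = 0" if "k \<notin> {..<N}" for k
  proof -
    have "Suc k \<le> tz (int (Suc k))" by (rule tz_ge)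
    then have "2 * n < Pe (Suc k)" "2 * n < Qe (Suc k)" using that unfolding Pe_def Qe_def N_def by auto
    then show ?thesis unfolding a_def Tn_def by simp
  qed
  have "f sums (\<Sum>k\<in>{..<N}. f k)"
    by (rule sums_finite) (auto simp: fk zero)
  moreover have "(\<Sum>k\<in>{..<N}. f k) = real (qd n) - real_of_int (Lterm n)"
  proof -
    have "(\<Sum>k\<in>{..<N}. f k) = - real_of_int (\<Sum>k\<in>{..<N}. a (Suc k))" by (simp add: fk sum_negf)
    also have "(\<Sum>k\<in>{..<N}. a (Suc k)) = (\<Sum>k\<in>{1..N}. a k)"
      using sum.atLeast1_atMost_eq[of a N] by simp
    also have "(\<Sum>k\<in>{1..N}. a k) = Lterm n - int (qd n)" using key by simp
    finally show ?thesis by simp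
  qed
  ultimately show ?thesis unfolding f_def by simp
qed

end
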